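(* In a phase space $Z_1$, the instantaneous perturbation propagation problem (the linearized Euler system with initial data $(v_x',v_y',v_z',p')(\cdot,0) = I \in Z_1$) is well posed on every interval of time $[0,t_0]$, and the null solution is stable with respect to the class $Z_1$ of initial perturbations.
   Context: Fix constants $U_0,c_0,\rho_0>0$. The linearized Euler system for $(v_x',v_y',v_z',p')$ depending on $(x,y,z,t)$ is: $\partial_t v_x' + U_0\partial_x v_x' + \frac1{\rho_0}\partial_x p' = 0$, $\partial_t v_y' + U_0\partial_x v_y' + \frac1{\rho_0}\partial_y p' = 0$, $\partial_t v_z' + U_0\partial_x v_z' + \frac1{\rho_0}\partial_z p' = 0$, $\partial_t p' + U_0\partial_xp' + \rho_0c_0^2(\partial_xv_x'+\partial_yv_y'+\partial_zv_z') = 0$. Phase space $Z_1$: fix real constants $k_i,l_i,m_i$ ($i=1,\dots,4$) with $k_1k_2k_3k_4\neq0$ and $\Delta = \frac{c_0\rho_0}{k_3k_4}\big[r_1(k_2k_3k_4+k_3m_2m_4+k_4l_2l_3) + r_2(k_1k_3k_4+k_3m_1m_4+k_4l_1l_3)\big]\neq0$, where $r_i=\sqrt{k_i^2+l_i^2+m_i^2}$. With $\xi_i=k_ix+l_iy+m_iz$, to each system $f=(f_1,\dots,f_4)$ of $C^1$ functions $\mathbb{R}\to\mathbb{R}$ associate $I_f=(F,G,H,P)$: $F = k_1f_1(\xi_1)+k_2f_2(\xi_2)+\frac{l_3}{k_3}f_3(\xi_3)+\frac{m_4}{k_4}f_4(\xi_4)$, $G = l_1f_1(\xi_1)+l_2f_2(\xi_2)-f_3(\xi_3)$,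 $H = m_1f_1(\xi_1)+m_2f_2(\xi_2)-f_4(\xi_4)$, $P = -c_0\rho_0r_1f_1(\xi_1)+c_0\rho_0r_2f_2(\xi_2)$. $Z_1$ is the set of all such $I_f$ with the usual algebraic operations and the topology of uniform convergence on $\mathbb{R}^3$ (neighbourhoods of the origin: sets containing some $V^\varepsilon=\{(F,G,H,P)\in Z_1: |F|,|G|,|H|,|P|<\varepsilon \text{ everywhere on }\mathbb{R}^3\}$). Well-posedness on $[0,t_0]$: (a) for every $I\in Z_1$ there is a unique solution of the system with initial value $I$ defined for $t\in[0,t_0]$, and (b) whenever $I_n\to I$ in $Z_1$, the solutions corresponding to $I_n$ converge in $Z_1$ to the solution corresponding to $I$ at every $t\in[0,t_0]$. Stability (Lyapunov) of the null solution with respect to $Z_1$: the problem is well posed on $[0,t_0]$ for every $t_0>0$, and for every neighbourhood $V^\varepsilon$ there is $\eta>0$ such that $I\in V^\eta$ implies that the solution lies in $V^\varepsilon$ for all $t\ge0$. *)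

theory Defs
  imports "HOL-Analysis.Analysis"
begin

text \<open>A spatial field R^3 -> R (curried in x y z) and a space-time field (x y z t).\<close>
type_synonym fld = "real \<Rightarrow> real \<Rightarrow> real \<Rightarrow> real"
type_synonym state = "fld \<times> fld \<times> fld \<times> fld"
type_synonym stfld = "real \<Rightarrow> real \<Rightarrow> real \<Rightarrow> real \<Rightarrow> real"
type_synonym sol = "stfld \<times> stfld \<times> stfld \<times> stfld"

definition C1_fun :: "(real \<Rightarrow> real) \<Rightarrow> bool" where
  "C1_fun f \<longleftrightarrow> (\<exists>f'. (\<forall>s. (f has_real_derivative f' s) (at s)) \<and> continuous_on UNIV f')"

definition rr :: "(nat \<Rightarrow> real) \<Rightarrow> (nat \<Rightarrow> real) \<Rightarrow> (nat \<Rightarrow> real) \<Rightarrow> nat \<Rightarrow> real" where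
  "rr k l m i = sqrt ((k i)^2 + (l i)^2 + (m i)^2)"

definition Delta :: "real \<Rightarrow> real \<Rightarrow> (nat \<Rightarrow> real) \<Rightarrow> (nat \<Rightarrow> real) \<Rightarrow> (nat \<Rightarrow> real) \<Rightarrow> real" where
  "Delta c0 rho0 k l m =
     c0 * rho0 / (k 3 * k 4) *
      (rr k l m 1 * (k 2 * k 3 * k 4 + k 3 * m 2 * m 4 + k 4 * l 2 * l 3)
     + rr k l m 2 * (k 1 * k 3 * k 4 + k 3 * m 1 * m 4 + k 4 * l 1 * l 3))"

definition If :: "real \<Rightarrow> real \<Rightarrow> (nat \<Rightarrow> real) \<Rightarrow> (nat \<Rightarrow> real) \<Rightarrow> (nat \<Rightarrow> real)
                   \<Rightarrow> (nat \<Rightarrow> real \<Rightarrow> real) \<Rightarrow> state" where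
  "If c0 rho0 k l m f =
    (let \<xi> = (\<lambda>i x y z. k i * x + l i * y + m i * z) in
     ((\<lambda>x y z. k 1 * f 1 (\<xi> 1 x y z) + k 2 * f 2 (\<xi> 2 x y z)
              + l 3 / k 3 * f 3 (\<xi> 3 x y z) + m 4 / k 4 * f 4 (\<xi> 4 x y z)),
      (\<lambda>x y z. l 1 * f 1 (\<xi> 1 x y z) + l 2 * f 2 (\<xi> 2 x y z) - f 3 (\<xi> 3 x y z)),
      (\<lambda>x y z. m 1 * f 1 (\<xi> 1 x y z) + m 2 * f 2 (\<xi> 2 x y z) - f 4 (\<xi> 4 x y z)),
      (\<lambda>x y z. - c0 * rho0 * rr k l m 1 * f 1 (\<xi> 1 x y z)
              + c0 * rho0 * rr k l m 2 * f 2 (\<xi> 2 x y z))))"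

definition Z1 :: "real \<Rightarrow> real \<Rightarrow> (nat \<Rightarrow> real) \<Rightarrow> (nat \<Rightarrow> real) \<Rightarrow> (nat \<Rightarrow> real) \<Rightarrow> state set" where
  "Z1 c0 rho0 k l m = {If c0 rho0 k l m f | f. \<forall>i\<in>{1..4::nat}. C1_fun (f i)}"

definition Veps :: "real \<Rightarrow> real \<Rightarrow> (nat \<Rightarrow> real) \<Rightarrow> (nat \<Rightarrow> real) \<Rightarrow> (nat \<Rightarrow> real)
                    \<Rightarrow> real \<Rightarrow> state set" where
  "Veps c0 rho0 k l m \<epsilon> = {(F, G, H, P) \<in> Z1 c0 rho0 k l m.
       \<forall>x y z. \<bar>F x y z\<bar> < \<epsilon> \<and> \<bar>G x y z\<bar> < \<epsilon> \<and> \<bar>H x y z\<bar> < \<epsilon> \<and> \<bar>P x y z\<bar> < \<epsilon>}"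

definition conv_Z1 :: "(nat \<Rightarrow> state) \<Rightarrow> state \<Rightarrow> bool" where
  "conv_Z1 X L \<longleftrightarrow> (\<forall>\<epsilon>>0. eventually (\<lambda>n. \<forall>x y z.
       \<bar>fst (X n) x y z - fst L x y z\<bar> < \<epsilon> \<and>
       \<bar>fst (snd (X n)) x y z - fst (snd L) x y z\<bar> < \<epsilon> \<and>
       \<bar>fst (snd (snd (X n))) x y z - fst (snd (snd L)) x y z\<bar> < \<epsilon> \<and>
       \<bar>snd (snd (snd (X n))) x y z - snd (snd (snd L)) x y z\<bar> < \<epsilon>) sequentially)"

definition slice :: "sol \<Rightarrow> real \<Rightarrow> state" where
  "slice u t = (case u of (vx, vy, vz, p) \<Rightarrow>
      ((\<lambda>x y z. vx x y z t), (\<lambda>x y z. vy x y z t), (\<lambda>x y z. vz x y z t), (\<lambda>x y z. p x y z t)))"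

definition C1_pderivs :: "real \<Rightarrow> stfld \<Rightarrow> stfld \<Rightarrow> stfld \<Rightarrow> stfld \<Rightarrow> stfld \<Rightarrow> bool" where
  "C1_pderivs t0 w wx wy wz wt \<longleftrightarrow>
    (\<forall>x y z t. t \<in> {0..t0} \<longrightarrow>
       ((\<lambda>s. w s y z t) has_real_derivative wx x y z t) (at x) \<and>
       ((\<lambda>s. w x s z t) has_real_derivative wy x y z t) (at y) \<and>
       ((\<lambda>s. w x y s t) has_real_derivative wz x y z t) (at z) \<and>
       ((\<lambda>s. w x y z s) has_real_derivative wt x y z t) (at t within {0..t0})) \<and>
    (\<forall>g \<in> {w, wx, wy, wz, wt}.
       continuous_on (UNIV \<times> UNIV \<times> UNIV \<times> {0..t0}) (\<lambda>(x, y, z, t). g x y z t))"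

definition is_solution :: "real \<Rightarrow> real \<Rightarrow> real \<Rightarrow> real \<Rightarrow> state \<Rightarrow> sol \<Rightarrow> bool" where
  "is_solution U0 c0 rho0 t0 I u \<longleftrightarrow>
    (case u of (vx, vy, vz, p) \<Rightarrow>
      (\<exists>vxx vxy vxz vxt vyx vyy vyz vyt vzx vzy vzz vzt px py pz pt.
         C1_pderivs t0 vx vxx vxy vxz vxt \<and>
         C1_pderivs t0 vy vyx vyy vyz vyt \<and>
         C1_pderivs t0 vz vzx vzy vzz vzt \<and>
         C1_pderivs t0 p px py pz pt \<and>
         (\<forall>x y z t. t \<in> {0..t0} \<longrightarrow>
            vxt x y z t + U0 * vxx x y z t + 1 / rho0 * px x y z t = 0 \<and>
            vyt x y z t + U0 * vyx x y z t + 1 / rho0 * py x y z t = 0 \<and>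
            vzt x y z t + U0 * vzx x y z t + 1 / rho0 * pz x y z t = 0 \<and>
            pt x y z t + U0 * px x y z t
              + rho0 * c0^2 * (vxx x y z t + vyy x y z t + vzz x y z t) = 0)) \<and>
      slice u 0 = I)"

definition Z1_solution :: "real \<Rightarrow> real \<Rightarrow> real \<Rightarrow> (nat \<Rightarrow> real) \<Rightarrow> (nat \<Rightarrow> real) \<Rightarrow> (nat \<Rightarrow> real)
                           \<Rightarrow> real \<Rightarrow> state \<Rightarrow> sol \<Rightarrow> bool" where
  "Z1_solution U0 c0 rho0 k l m t0 I u \<longleftrightarrow>
     is_solution U0 c0 rho0 t0 I u \<and> (\<forall>t\<in>{0..t0}. slice u t \<in> Z1 c0 rho0 k l m)"

definition well_posed :: "real \<Rightarrow> real \<Rightarrow> real \<Rightarrow> (nat \<Rightarrow> real) \<Rightarrow> (nat \<Rightarrow> real) \<Rightarrow> (nat \<Rightarrow> real)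
                          \<Rightarrow> real \<Rightarrow> bool" where
  "well_posed U0 c0 rho0 k l m t0 \<longleftrightarrow>
    (\<forall>I \<in> Z1 c0 rho0 k l m.
       (\<exists>u. Z1_solution U0 c0 rho0 k l m t0 I u) \<and>
       (\<forall>u v. Z1_solution U0 c0 rho0 k l m t0 I u \<longrightarrow> Z1_solution U0 c0 rho0 k l m t0 I v \<longrightarrow>
              (\<forall>t\<in>{0..t0}. slice u t = slice v t))) \<and>
    (\<forall>I Is u us. I \<in> Z1 c0 rho0 k l m \<longrightarrow> (\<forall>n. Is n \<in> Z1 c0 rho0 k l m) \<longrightarrow> conv_Z1 Is I \<longrightarrow>
       Z1_solution U0 c0 rho0 k l m t0 I u \<longrightarrow>
       (\<forall>n. Z1_solution U0 c0 rho0 k l m t0 (Is n) (us n)) \<longrightarrow>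
       (\<forall>t\<in>{0..t0}. conv_Z1 (\<lambda>n. slice (us n) t) (slice u t)))"

definition lyapunov_stable :: "real \<Rightarrow> real \<Rightarrow> real \<Rightarrow> (nat \<Rightarrow> real) \<Rightarrow> (nat \<Rightarrow> real) \<Rightarrow> (nat \<Rightarrow> real) \<Rightarrow> bool" where
  "lyapunov_stable U0 c0 rho0 k l m \<longleftrightarrow>
    (\<forall>t0>0. well_posed U0 c0 rho0 k l m t0) \<and>
    (\<forall>\<epsilon>>0. \<exists>\<eta>>0. \<forall>I \<in> Veps c0 rho0 k l m \<eta>.
       \<forall>t0>0. \<forall>u. Z1_solution U0 c0 rho0 k l m t0 I u \<longrightarrow>
          (\<forall>t\<in>{0..t0}. slice u t \<in> Veps c0 rho0 k l m \<epsilon>))"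

end

theory Submission
  imports Defs
begin

lemma transport:
  fixes \<phi> \<phi>x \<phi>t :: "real \<Rightarrow> real \<Rightarrow> real"
  assumes dx: "\<And>x t. t \<in> {0..tb} \<Longrightarrow> ((\<lambda>s. \<phi> s t) has_real_derivative \<phi>x x t) (at x)"
    and dt: "\<And>x t. t \<in> {0..tb} \<Longrightarrow> ((\<lambda>s. \<phi> x s) has_real_derivative \<phi>t x t) (at t within {0..tb})"
    and cx: "continuous_on ({0..tb} \<times> UNIV) (\<lambda>(t, x). \<phi>x x t)"
    and eq: "\<And>x t. t \<in> {0..tb} \<Longrightarrow> \<phi>t x t = - v * \<phi>x x t"
    and t: "t \<in> {0..tb}"
  shows "\<phi> (x + v * t) t = \<phi> x 0"
proof -
  have cb: "continuous_on ({0..tb} \<times> UNIV) (\<lambda>p. blinfun_mult_left ((\<lambda>(t, x). \<phi>x x t) p))"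
    by (rule bounded_linear.continuous_on[OF bounded_linear_blinfun_mult_left cx])
  have J: "((\<lambda>(a, b). \<phi> b a) has_derivative (\<lambda>(ta, tb). \<phi>t b a * ta + blinfun_mult_left (\<phi>x b a) tb))
     (at (a, b) within {0..tb} \<times> UNIV)" if a: "a \<in> {0..tb}" for a b
  proof (rule has_derivative_partialsI[where f = "\<lambda>a b. \<phi> b a" and fx = "(*) (\<phi>t b a)"])
    show "((\<lambda>a. \<phi> b a) has_derivative (*) (\<phi>t b a)) (at a within {0..tb})"
      using dt[OF a, of b] by (simp add: has_field_derivative_def)
    show "((\<lambda>y. \<phi> y x) has_derivative blinfun_apply (blinfun_mult_left (\<phi>x y x))) (at y within UNIV)"
      if "x \<in> {0..tb}" "y \<in> UNIV" for x y
      using dx[OF that(1), of y] unfolding has_field_derivative_def by (rule has_derivative_eq_rhs) (auto simp: mult.commute)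
    have "continuous (at (a, b) within {0..tb} \<times> UNIV) (\<lambda>p. blinfun_mult_left ((\<lambda>(t, x). \<phi>x x t) p))"
      using cb a by (simp add: continuous_on_eq_continuous_within)
    then show "continuous (at (a, b) within {0..tb} \<times> UNIV) (\<lambda>(x, y). blinfun_mult_left (\<phi>x y x))"
      by (simp add: split_beta')
  qed (use a in auto)
  have J2: "((\<lambda>(a, b). \<phi> b a) has_derivative (\<lambda>(ta, tb). \<phi>t (snd p) (fst p) * ta + blinfun_mult_left (\<phi>x (snd p) (fst p)) tb))
     (at p within {0..tb} \<times> UNIV)" if "p \<in> {0..tb} \<times> UNIV" for p
    using J[of "fst p" "snd p"] that by (cases p) auto
  define h where "h s = \<phi> (x + v * s) s" for s
  have hd: "(h has_derivative (\<lambda>_. 0)) (at s within {0..tb})" if s: "s \<in> {0..tb}" for s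
  proof -
    have g: "((\<lambda>s. (s, x + v * s)) has_derivative (\<lambda>q. (q, v * q))) (at s within {0..tb})"
      by (auto intro!: derivative_eq_intros)
    have img: "(\<lambda>s. (s, x + v * s)) ` {0..tb} \<subseteq> {0..tb} \<times> UNIV" by auto
    have "((\<lambda>s. (\<lambda>(a, b). \<phi> b a) (s, x + v * s)) has_derivative
        (\<lambda>q. (\<lambda>(ta, tb). \<phi>t (x + v * s) s * ta + blinfun_mult_left (\<phi>x (x + v * s) s) tb) (q, v * q)))
        (at s within {0..tb})"
      using has_derivative_in_compose2[OF J2 img s g] by simp
    moreover have "(\<lambda>q. (\<lambda>(ta, tb). \<phi>t (x + v * s) s * ta + blinfun_mult_left (\<phi>x (x + v * s) s) tb) (q, v * q)) = (\<lambda>_. 0)"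
      using eq[OF s] by (auto simp: algebra_simps)
    ultimately show ?thesis unfolding h_def by simp
  qed
  obtain c where "\<forall>s\<in>{0..tb}. h s = c"
    using has_derivative_zero_constant[of "{0..tb}" h] hd by auto
  then have "h t = h 0" using t by auto
  then show ?thesis unfolding h_def by simp
qed


locale eul =
  fixes U0 c0 rho0 :: real and k l m :: "nat \<Rightarrow> real"
  assumes U0pos: "U0 > 0" and c0pos: "c0 > 0" and rho0pos: "rho0 > 0"
    and kne: "\<forall>i\<in>{1..4::nat}. k i \<noteq> 0"
    and Dne: "Delta c0 rho0 k l m \<noteq> 0"
begin
definition "r i = rr k l m i"
definition "al i = k i + l 3 * l i / k 3 + m 4 * m i / k 4"
definition "DD = al 1 * r 2 + al 2 * r 1"
definition "SS F G H = F + l 3 / k 3 * G + m 4 / k 4 * H"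
definition "W1 F G H P = (r 2 * SS F G H - al 2 * P / (c0*rho0)) / DD"
definition "W2 F G H P = (r 1 * SS F G H + al 1 * P / (c0*rho0)) / DD"
definition "W j F G H P = (if j = (1::nat) then W1 F G H P else if j = 2 then W2 F G H P
   else if j = 3 then l 1 * W1 F G H P + l 2 * W2 F G H P - G else m 1 * W1 F G H P + m 2 * W2 F G H P - H)"
definition "RF V = k 1 * V (1::nat) + k 2 * V 2 + l 3 / k 3 * V 3 + m 4 / k 4 * V 4"
definition "RG V = l 1 * V (1::nat) + l 2 * V 2 - V 3"
definition "RH V = m 1 * V (1::nat) + m 2 * V 2 - V 4"
definition "RP V = - c0 * rho0 * r 1 * V (1::nat) + c0 * rho0 * r 2 * V 2"
definition "vel j = (if j = (1::nat) then (U0 * k 1 - c0 * r 1) / k 1 else if j = 2 then (U0 * k 2 + c0 * r 2) / k 2 else U0)"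

lemma k1: "k 1 \<noteq> 0" and k2: "k 2 \<noteq> 0" and k3: "k 3 \<noteq> 0" and k4: "k 4 \<noteq> 0"
  using kne by auto

lemma DDne: "DD \<noteq> 0"
proof -
  have "Delta c0 rho0 k l m = c0 * rho0 * DD"
    unfolding Delta_def DD_def al_def r_def using k3 k4
    by (simp add: field_simps)
  then show ?thesis using Dne by auto
qed

lemma cr: "c0 * rho0 \<noteq> 0" using c0pos rho0pos by auto

lemma SS_R: "SS (RF V) (RG V) (RH V) = al 1 * V 1 + al 2 * V 2"
  unfolding SS_def RF_def RG_def RH_def al_def using k3 k4 by (simp add: field_simps)
lemma RP_c: "RP V / (c0 * rho0) = - r 1 * V 1 + r 2 * V 2"
  unfolding RP_def using cr by (simp add: field_simps)

lemma idA: "j \<in> {1..4} \<Longrightarrow> W j (RF V) (RG V) (RH V) (RP V) = V j"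
proof -
  assume j: "j \<in> {1..4}"
  have w1: "W1 (RF V) (RG V) (RH V) (RP V) = V 1"
  proof -
    have "r 2 * SS (RF V) (RG V) (RH V) - al 2 * (RP V / (c0*rho0)) = DD * V 1"
      unfolding SS_R RP_c DD_def by (simp add: algebra_simps)
    then show ?thesis unfolding W1_def using DDne by (simp add: field_simps)
  qed
  have w2: "W2 (RF V) (RG V) (RH V) (RP V) = V 2"
  proof -
    have "r 1 * SS (RF V) (RG V) (RH V) + al 1 * (RP V / (c0*rho0)) = DD * V 2"
      unfolding SS_R RP_c DD_def by (simp add: algebra_simps)
    then show ?thesis unfolding W2_def using DDne by (simp add: field_simps)
  qed
  from j have "j = 1 \<or> j = 2 \<or> j = 3 \<or> j = 4" by auto
  then show ?thesis using w1 w2 unfolding W_def by (auto simp: RG_def RH_def)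
qed

lemma W12: "al 1 * W1 F G H P + al 2 * W2 F G H P = SS F G H"
  "- r 1 * W1 F G H P + r 2 * W2 F G H P = P / (c0 * rho0)"
proof -
  define q where "q = P / (c0 * rho0)"
  have e1: "al 1 * W1 F G H P + al 2 * W2 F G H P = (al 1 * (r 2 * SS F G H - al 2 * q) + al 2 * (r 1 * SS F G H + al 1 * q)) / DD"
    unfolding W1_def W2_def q_def using DDne by (simp add: field_simps)
  have "al 1 * (r 2 * SS F G H - al 2 * q) + al 2 * (r 1 * SS F G H + al 1 * q) = DD * SS F G H"
    unfolding DD_def by (simp add: algebra_simps)
  with e1 show "al 1 * W1 F G H P + al 2 * W2 F G H P = SS F G H" using DDne by simp
  have e2: "- r 1 * W1 F G H P + r 2 * W2 F G H P = (- r 1 * (r 2 * SS F G H - al 2 * q) + r 2 * (r 1 * SS F G H + al 1 * q)) / DD"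
    unfolding W1_def W2_def q_def using DDne by (simp add: field_simps)
  have "- r 1 * (r 2 * SS F G H - al 2 * q) + r 2 * (r 1 * SS F G H + al 1 * q) = DD * q"
    unfolding DD_def by (simp add: algebra_simps)
  with e2 show "- r 1 * W1 F G H P + r 2 * W2 F G H P = P / (c0 * rho0)" using DDne q_def by simp
qed

lemma idB:
  "RF (\<lambda>j. W j F G H P) = F" "RG (\<lambda>j. W j F G H P) = G"
  "RH (\<lambda>j. W j F G H P) = H" "RP (\<lambda>j. W j F G H P) = P"
proof -
  have "RF (\<lambda>j. W j F G H P) = al 1 * W1 F G H P + al 2 * W2 F G H P - l 3 / k 3 * G - m 4 / k 4 * H"
    unfolding RF_def W_def al_def by (simp add: algebra_simps)
  then show "RF (\<lambda>j. W j F G H P) = F" unfolding W12 SS_def by simp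
  show "RG (\<lambda>j. W j F G H P) = G" "RH (\<lambda>j. W j F G H P) = H" unfolding RG_def RH_def W_def by simp_all
  have "RP (\<lambda>j. W j F G H P) = c0 * rho0 * (- r 1 * W1 F G H P + r 2 * W2 F G H P)"
    unfolding RP_def W_def by (simp add: algebra_simps)
  then show "RP (\<lambda>j. W j F G H P) = P" unfolding W12 using cr by simp
qed

lemma rsq: "r i * r i = (k i)^2 + (l i)^2 + (m i)^2"
  unfolding r_def rr_def by (simp add: sum_squares_ge_zero)

lemma eigen:
  fixes X :: "nat \<Rightarrow> real"
  shows "RF (\<lambda>j. - vel j * X j) + U0 * RF X + 1/rho0 * RP X = 0"
   "RG (\<lambda>j. - vel j * X j) + U0 * RG X + 1/rho0 * RP (\<lambda>j. l j / k j * X j) = 0"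
   "RH (\<lambda>j. - vel j * X j) + U0 * RH X + 1/rho0 * RP (\<lambda>j. m j / k j * X j) = 0"
   "RP (\<lambda>j. - vel j * X j) + U0 * RP X + rho0 * c0^2 * (RF X + RG (\<lambda>j. l j / k j * X j) + RH (\<lambda>j. m j / k j * X j)) = 0"
proof -
  show "RF (\<lambda>j. - vel j * X j) + U0 * RF X + 1/rho0 * RP X = 0"
    unfolding RF_def RP_def vel_def using k1 k2 k3 k4 rho0pos by (simp add: field_simps)
  show "RG (\<lambda>j. - vel j * X j) + U0 * RG X + 1/rho0 * RP (\<lambda>j. l j / k j * X j) = 0"
    unfolding RG_def RP_def vel_def using k1 k2 k3 k4 rho0pos by (simp add: field_simps)
  show "RH (\<lambda>j. - vel j * X j) + U0 * RH X + 1/rho0 * RP (\<lambda>j. m j / k j * X j) = 0"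
    unfolding RH_def RP_def vel_def using k1 k2 k3 k4 rho0pos by (simp add: field_simps)
  have s: "RF X + RG (\<lambda>j. l j / k j * X j) + RH (\<lambda>j. m j / k j * X j) = r 1 * r 1 / k 1 * X 1 + r 2 * r 2 / k 2 * X 2"
    unfolding rsq RF_def RG_def RH_def using k1 k2 k3 k4 by (simp add: field_simps power2_eq_square)
  show "RP (\<lambda>j. - vel j * X j) + U0 * RP X + rho0 * c0^2 * (RF X + RG (\<lambda>j. l j / k j * X j) + RH (\<lambda>j. m j / k j * X j)) = 0"
    unfolding s RP_def vel_def using k1 k2 k3 k4 rho0pos by (simp add: field_simps power2_eq_square)
qed

definition "cF j = W j 1 0 0 0"
definition "cG j = W j 0 1 0 0"
definition "cH j = W j 0 0 1 0"
definition "cP j = W j 0 0 0 1"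
lemma Wlin: "W j F G H P = cF j * F + cG j * G + cH j * H + cP j * P"
  unfolding cF_def cG_def cH_def cP_def W_def W1_def W2_def SS_def using DDne cr k3 k4
  by (simp add: field_simps)

lemma Rcong: assumes "\<forall>j\<in>{1..4::nat}. V j = V' j"
  shows "RF V = RF V'" "RG V = RG V'" "RH V = RH V'" "RP V = RP V'"
  using assms unfolding RF_def RG_def RH_def RP_def by auto

end


lemma lin4_deriv:
  assumes "(f1 has_real_derivative d1) (at x within S)" "(f2 has_real_derivative d2) (at x within S)"
    "(f3 has_real_derivative d3) (at x within S)" "(f4 has_real_derivative d4) (at x within S)"
  shows "((\<lambda>s. a * f1 s + b * f2 s + c * f3 s + e * f4 s) has_real_derivative a*d1+b*d2+c*d3+e*d4) (at x within S)"
  using assms by (auto intro!: derivative_eq_intros)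

lemma restr_cont:
  fixes g :: "real \<Rightarrow> real \<Rightarrow> real \<Rightarrow> real \<Rightarrow> real" and t0 y z :: real
  assumes "continuous_on (UNIV \<times> UNIV \<times> UNIV \<times> {0..t0}) (\<lambda>(x, y, z, t). g x y z t)"
  shows "continuous_on ({0..t0} \<times> UNIV) (\<lambda>(t, x). g x y z t)"
proof -
  have m: "continuous_on ({0..t0} \<times> UNIV) (\<lambda>(t::real, x::real). (x, y, z, t))"
    by (auto intro!: continuous_intros simp: split_beta')
  have "continuous_on ({0..t0} \<times> UNIV) ((\<lambda>(x, y, z, t). g x y z t) \<circ> (\<lambda>(t, x). (x, y, z, t)))"
    by (rule continuous_on_compose[OF m continuous_on_subset[OF assms]]) auto
  then show ?thesis by (simp add: o_def split_beta')
qed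

lemma C1D:
  assumes "C1_pderivs t0 w wx wy wz wt" "t \<in> {0..t0}"
  shows "((\<lambda>s. w s y z t) has_real_derivative wx x y z t) (at x)"
    "((\<lambda>s. w x s z t) has_real_derivative wy x y z t) (at y)"
    "((\<lambda>s. w x y s t) has_real_derivative wz x y z t) (at z)"
    "((\<lambda>s. w x y z s) has_real_derivative wt x y z t) (at t within {0..t0})"
  using assms unfolding C1_pderivs_def by blast+

lemma C1C:
  assumes "C1_pderivs t0 w wx wy wz wt"
  shows "continuous_on (UNIV \<times> UNIV \<times> UNIV \<times> {0..t0}) (\<lambda>(x, y, z, t). wx x y z t)"
  using assms unfolding C1_pderivs_def by blast

context eul begin

definition "Wst j I x y z = W j (fst I x y z) (fst (snd I) x y z) (fst (snd (snd I)) x y z) (snd (snd (snd I)) x y z)"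
definition "Evo I t = ((\<lambda>x y z. RF (\<lambda>j. Wst j I (x - vel j * t) y z)), (\<lambda>x y z. RG (\<lambda>j. Wst j I (x - vel j * t) y z)),
   (\<lambda>x y z. RH (\<lambda>j. Wst j I (x - vel j * t) y z)), (\<lambda>x y z. RP (\<lambda>j. Wst j I (x - vel j * t) y z)))"

lemma key:
  assumes sol: "Z1_solution U0 c0 rho0 k l m t0 I u" and t: "t \<in> {0..t0}"
  shows "slice u t = Evo I t"
proof -
  obtain vx vy vz p where u: "u = (vx, vy, vz, p)" by (cases u) auto
  from sol obtain vxx vxy vxz vxt vyx vyy vyz vyt vzx vzy vzz vzt px py pz pt where
    Cvx: "C1_pderivs t0 vx vxx vxy vxz vxt" and
    Cvy: "C1_pderivs t0 vy vyx vyy vyz vyt" and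
    Cvz: "C1_pderivs t0 vz vzx vzy vzz vzt" and
    Cp: "C1_pderivs t0 p px py pz pt" and
    pde: "\<And>x y z t. t \<in> {0..t0} \<Longrightarrow>
            vxt x y z t + U0 * vxx x y z t + 1 / rho0 * px x y z t = 0 \<and>
            vyt x y z t + U0 * vyx x y z t + 1 / rho0 * py x y z t = 0 \<and>
            vzt x y z t + U0 * vzx x y z t + 1 / rho0 * pz x y z t = 0 \<and>
            pt x y z t + U0 * px x y z t
              + rho0 * c0^2 * (vxx x y z t + vyy x y z t + vzz x y z t) = 0" and
    init: "slice u 0 = I" and inZ: "\<forall>t\<in>{0..t0}. slice u t \<in> Z1 c0 rho0 k l m"
    unfolding Z1_solution_def is_solution_def u by auto
  define w where "w j x y z t = W j (vx x y z t) (vy x y z t) (vz x y z t) (p x y z t)" for j x y z t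
  define wx where "wx j x y z t = W j (vxx x y z t) (vyx x y z t) (vzx x y z t) (px x y z t)" for j x y z t
  define wy where "wy j x y z t = W j (vxy x y z t) (vyy x y z t) (vzy x y z t) (py x y z t)" for j x y z t
  define wz where "wz j x y z t = W j (vxz x y z t) (vyz x y z t) (vzz x y z t) (pz x y z t)" for j x y z t
  define wt where "wt j x y z t = W j (vxt x y z t) (vyt x y z t) (vzt x y z t) (pt x y z t)" for j x y z t
  have dwx: "((\<lambda>s. w j s y z t) has_real_derivative wx j x y z t) (at x)" if "t \<in> {0..t0}" for j x y z t
    unfolding w_def wx_def Wlin[of j]
    by (rule lin4_deriv) (rule C1D[OF _ that], fact)+
  have dwy: "((\<lambda>s. w j x s z t) has_real_derivative wy j x y z t) (at y)" if "t \<in> {0..t0}" for j x y z t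
    unfolding w_def wy_def Wlin[of j]
    by (rule lin4_deriv) (rule C1D[OF _ that], fact)+
  have dwz: "((\<lambda>s. w j x y s t) has_real_derivative wz j x y z t) (at z)" if "t \<in> {0..t0}" for j x y z t
    unfolding w_def wz_def Wlin[of j]
    by (rule lin4_deriv) (rule C1D[OF _ that], fact)+
  have dwt: "((\<lambda>s. w j x y z s) has_real_derivative wt j x y z t) (at t within {0..t0})" if "t \<in> {0..t0}" for j x y z t
    unfolding w_def wt_def Wlin[of j]
    by (rule lin4_deriv) (rule C1D[OF _ that], fact)+
  have cwx: "continuous_on ({0..t0} \<times> UNIV) (\<lambda>(t, x). wx j x y z t)" for j y z
  proof -
    have "continuous_on ({0..t0} \<times> UNIV) (\<lambda>(t, x). g x y z t)"
      if "g \<in> {vxx, vyx, vzx, px}" for g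
      using that C1C[OF Cvx] C1C[OF Cvy] C1C[OF Cvz] C1C[OF Cp] by (intro restr_cont) auto
    then have c: "continuous_on ({0..t0} \<times> UNIV) (\<lambda>q. vxx (snd q) y z (fst q))"
      "continuous_on ({0..t0} \<times> UNIV) (\<lambda>q. vyx (snd q) y z (fst q))"
      "continuous_on ({0..t0} \<times> UNIV) (\<lambda>q. vzx (snd q) y z (fst q))"
      "continuous_on ({0..t0} \<times> UNIV) (\<lambda>q. px (snd q) y z (fst q))"
      by (auto simp: split_beta')
    show ?thesis unfolding wx_def Wlin[of j] split_beta'
      by (intro continuous_intros c)
  qed
  have rel: "wy j x y z t = l j / k j * wx j x y z t \<and> wz j x y z t = m j / k j * wx j x y z t"
    if tt: "t \<in> {0..t0}" and j: "j \<in> {1..4}" for j x y z t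
  proof -
    obtain g where g: "slice u t = If c0 rho0 k l m g" and gC: "\<forall>i\<in>{1..4::nat}. C1_fun (g i)"
      using bspec[OF inZ tt] unfolding Z1_def by blast
    have c: "(\<lambda>x y z. vx x y z t) = fst (If c0 rho0 k l m g)"
      "(\<lambda>x y z. vy x y z t) = fst (snd (If c0 rho0 k l m g))"
      "(\<lambda>x y z. vz x y z t) = fst (snd (snd (If c0 rho0 k l m g)))"
      "(\<lambda>x y z. p x y z t) = snd (snd (snd (If c0 rho0 k l m g)))"
      using g[symmetric] by (simp_all add: slice_def u)
    have wg: "w j s y' z' t = g j (k j * s + l j * y' + m j * z')" for s y' z'
    proof -
      define V where "V i = g i (k i * s + l i * y' + m i * z')" for i
      have "vx s y' z' t = RF V" "vy s y' z' t = RG V" "vz s y' z' t = RH V" "p s y' z' t = RP V"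
        using c[THEN fun_cong, THEN fun_cong, THEN fun_cong, of s y' z']
        by (simp_all add: If_def Let_def RF_def RG_def RH_def RP_def V_def r_def)
      then show ?thesis unfolding w_def using idA[OF j, of V] by (simp add: V_def)
    qed
    obtain g' where g': "\<And>s. (g j has_real_derivative g' s) (at s)"
      using bspec[OF gC j] unfolding C1_fun_def by blast
    define \<xi> where "\<xi> = k j * x + l j * y + m j * z"
    have "((\<lambda>s. w j s y z t) has_real_derivative g' \<xi> * k j) (at x)"
      unfolding wg \<xi>_def
      by (rule DERIV_chain2[OF g']) (auto intro!: derivative_eq_intros)
    then have ex: "wx j x y z t = g' \<xi> * k j" using dwx[OF tt] DERIV_unique by blast
    have "((\<lambda>s. w j x s z t) has_real_derivative g' \<xi> * l j) (at y)"
      unfolding wg \<xi>_def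
      by (rule DERIV_chain2[OF g']) (auto intro!: derivative_eq_intros)
    then have ey: "wy j x y z t = g' \<xi> * l j" using dwy[OF tt] DERIV_unique by blast
    have "((\<lambda>s. w j x y s t) has_real_derivative g' \<xi> * m j) (at z)"
      unfolding wg \<xi>_def
      by (rule DERIV_chain2[OF g']) (auto intro!: derivative_eq_intros)
    then have ez: "wz j x y z t = g' \<xi> * m j" using dwz[OF tt] DERIV_unique by blast
    have "k j \<noteq> 0" using kne j by auto
    then show ?thesis using ex ey ez by (simp add: field_simps)
  qed
  have tr: "wt j x y z t = - vel j * wx j x y z t"
    if tt: "t \<in> {0..t0}" and j: "j \<in> {1..4}" for j x y z t
  proof -
    define X where "X i = wx i x y z t" for i
    define T where "T i = wt i x y z t" for i
    define T' where "T' i = - vel i * X i" for i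
    have R: "vxx x y z t = RF X" "vyx x y z t = RG X" "vzx x y z t = RH X" "px x y z t = RP X"
      unfolding X_def wx_def idB by simp_all
    have Ry: "vxy x y z t = RF (\<lambda>i. wy i x y z t)" "vyy x y z t = RG (\<lambda>i. wy i x y z t)"
      "vzy x y z t = RH (\<lambda>i. wy i x y z t)" "py x y z t = RP (\<lambda>i. wy i x y z t)"
      unfolding wy_def idB by simp_all
    have Rz: "vxz x y z t = RF (\<lambda>i. wz i x y z t)" "vyz x y z t = RG (\<lambda>i. wz i x y z t)"
      "vzz x y z t = RH (\<lambda>i. wz i x y z t)" "pz x y z t = RP (\<lambda>i. wz i x y z t)"
      unfolding wz_def idB by simp_all
    have Rt: "vxt x y z t = RF T" "vyt x y z t = RG T" "vzt x y z t = RH T" "pt x y z t = RP T"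
      unfolding T_def wt_def idB by simp_all
    have Y: "\<forall>i\<in>{1..4::nat}. wy i x y z t = l i / k i * X i" and
      Z: "\<forall>i\<in>{1..4::nat}. wz i x y z t = m i / k i * X i"
      using rel[OF tt] unfolding X_def by auto
    note e = eigen[of X]
    note P = pde[OF tt, of x y z]
    have "RF T = RF T'" "RG T = RG T'" "RH T = RH T'" "RP T = RP T'"
      using P e Rcong[OF Y] Rcong[OF Z] unfolding R Ry Rz Rt T'_def by (simp_all add: algebra_simps)
    then have "W j (RF T) (RG T) (RH T) (RP T) = W j (RF T') (RG T') (RH T') (RP T')" by simp
    then have "T j = T' j" using idA[OF j] by simp
    then show ?thesis unfolding T_def T'_def X_def .
  qed
  have wtrans: "w j x y z t = w j (x - vel j * t) y z 0" if j: "j \<in> {1..4}" for j x y z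
  proof -
    have "w j ((x - vel j * t) + vel j * t) y z t = w j (x - vel j * t) y z 0"
      by (rule transport[where \<phi> = "\<lambda>x t. w j x y z t" and \<phi>x = "\<lambda>x t. wx j x y z t"
            and \<phi>t = "\<lambda>x t. wt j x y z t" and tb = t0 and v = "vel j" and x = "x - vel j * t" and t = t])
        (fact dwx, fact dwt, fact cwx, rule tr[OF _ j], assumption, rule t)
    then show ?thesis by simp
  qed
  have w0: "w j x y z 0 = Wst j I x y z" for j x y z
    using init unfolding w_def Wst_def by (auto simp: slice_def u)
  have comp: "\<forall>j\<in>{1..4::nat}. w j x y z t = Wst j I (x - vel j * t) y z" for x y z
    using wtrans w0 by auto
  show ?thesis
    unfolding u slice_def Evo_def
    using Rcong[OF comp] idB[of "vx _ _ _ t" "vy _ _ _ t" "vz _ _ _ t" "p _ _ _ t"]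
    by (simp add: w_def)
qed

end


lemma cont_aff:
  fixes h :: "real \<Rightarrow> real"
  assumes "continuous_on UNIV h"
  shows "continuous_on S (\<lambda>(x::real, y::real, z::real, t::real). e * h (a*x + b*y + c*z - d*t))"
proof -
  have m: "continuous_on S (\<lambda>(x::real, y::real, z::real, t::real). a*x + b*y + c*z - d*t)"
    by (auto intro!: continuous_intros simp: split_beta')
  have "continuous_on S (\<lambda>p. h ((\<lambda>(x::real, y::real, z::real, t::real). a*x + b*y + c*z - d*t) p))"
    by (rule continuous_on_compose2[OF assms m]) auto
  then have "continuous_on S (\<lambda>p. e * h ((\<lambda>(x::real, y::real, z::real, t::real). a*x + b*y + c*z - d*t) p))"
    by (intro continuous_intros)
  then show ?thesis by (simp add: split_beta')
qed

lemma C1V: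
  fixes g g' :: "real \<Rightarrow> real"
  assumes d: "\<And>s. (g has_real_derivative g' s) (at s)" and c: "continuous_on UNIV g'"
  shows "C1_pderivs t0 (\<lambda>x y z t. g (a*x + b*y + c'*z - e*t))
     (\<lambda>x y z t. a * g' (a*x + b*y + c'*z - e*t)) (\<lambda>x y z t. b * g' (a*x + b*y + c'*z - e*t))
     (\<lambda>x y z t. c' * g' (a*x + b*y + c'*z - e*t)) (\<lambda>x y z t. - e * g' (a*x + b*y + c'*z - e*t))"
  unfolding C1_pderivs_def
proof (intro conjI allI impI ballI)
  fix x y z t :: real
  show "((\<lambda>s. g (a * s + b*y + c'*z - e*t)) has_real_derivative a * g' (a*x + b*y + c'*z - e*t)) (at x)"
    by (rule DERIV_chain2[OF d, THEN DERIV_cong]) (auto intro!: derivative_eq_intros)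
  show "((\<lambda>s. g (a*x + b * s + c'*z - e*t)) has_real_derivative b * g' (a*x + b*y + c'*z - e*t)) (at y)"
    by (rule DERIV_chain2[OF d, THEN DERIV_cong]) (auto intro!: derivative_eq_intros)
  show "((\<lambda>s. g (a*x + b*y + c' * s - e*t)) has_real_derivative c' * g' (a*x + b*y + c'*z - e*t)) (at z)"
    by (rule DERIV_chain2[OF d, THEN DERIV_cong]) (auto intro!: derivative_eq_intros)
  have "((\<lambda>s. g (a*x + b*y + c'*z - e * s)) has_real_derivative - e * g' (a*x + b*y + c'*z - e*t)) (at t)"
    by (rule DERIV_chain2[OF d, THEN DERIV_cong]) (auto intro!: derivative_eq_intros)
  then show "((\<lambda>s. g (a*x + b*y + c'*z - e * s)) has_real_derivative - e * g' (a*x + b*y + c'*z - e*t)) (at t within {0..t0})"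
    by (rule has_field_derivative_at_within)
next
  fix G assume "G \<in> {(\<lambda>x y z t. g (a*x + b*y + c'*z - e*t)),
     (\<lambda>x y z t. a * g' (a*x + b*y + c'*z - e*t)), (\<lambda>x y z t. b * g' (a*x + b*y + c'*z - e*t)),
     (\<lambda>x y z t. c' * g' (a*x + b*y + c'*z - e*t)), (\<lambda>x y z t. - e * g' (a*x + b*y + c'*z - e*t))}"
  moreover have "continuous_on UNIV g"
    using d by (metis DERIV_isCont continuous_at_imp_continuous_on)
  ultimately show "continuous_on (UNIV \<times> UNIV \<times> UNIV \<times> {0..t0}) (\<lambda>(x, y, z, t). G x y z t)"
    using cont_aff[OF c] cont_aff[of g _ 1] cont_aff[OF c, of _ "-e"] by auto
qed

lemma cont_lin4:
  assumes "continuous_on S (\<lambda>(x, y, z, t). f1 x y z t)" "continuous_on S (\<lambda>(x, y, z, t). f2 x y z t)"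
    "continuous_on S (\<lambda>(x, y, z, t). f3 x y z t)" "continuous_on S (\<lambda>(x, y, z, t). f4 x y z t)"
  shows "continuous_on S (\<lambda>(x, y, z, t). a1 * f1 x y z t + a2 * f2 x y z t + a3 * f3 x y z t + a4 * (f4 x y z t::real))"
  using assms unfolding split_beta' by (intro continuous_intros)

lemma C1all:
  assumes "C1_pderivs t0 w wx wy wz wt"
  shows "continuous_on (UNIV \<times> UNIV \<times> UNIV \<times> {0..t0}) (\<lambda>(x, y, z, t). w x y z t)"
    "continuous_on (UNIV \<times> UNIV \<times> UNIV \<times> {0..t0}) (\<lambda>(x, y, z, t). wx x y z t)"
    "continuous_on (UNIV \<times> UNIV \<times> UNIV \<times> {0..t0}) (\<lambda>(x, y, z, t). wy x y z t)"
    "continuous_on (UNIV \<times> UNIV \<times> UNIV \<times> {0..t0}) (\<lambda>(x, y, z, t). wz x y z t)"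
    "continuous_on (UNIV \<times> UNIV \<times> UNIV \<times> {0..t0}) (\<lambda>(x, y, z, t). wt x y z t)"
  using assms unfolding C1_pderivs_def by blast+

lemma C1lin:
  assumes A1: "C1_pderivs t0 V1 V1x V1y V1z V1t" and A2: "C1_pderivs t0 V2 V2x V2y V2z V2t"
    and A3: "C1_pderivs t0 V3 V3x V3y V3z V3t" and A4: "C1_pderivs t0 V4 V4x V4y V4z V4t"
  shows "C1_pderivs t0 (\<lambda>x y z t. a1 * V1 x y z t + a2 * V2 x y z t + a3 * V3 x y z t + a4 * V4 x y z t)
    (\<lambda>x y z t. a1 * V1x x y z t + a2 * V2x x y z t + a3 * V3x x y z t + a4 * V4x x y z t)
    (\<lambda>x y z t. a1 * V1y x y z t + a2 * V2y x y z t + a3 * V3y x y z t + a4 * V4y x y z t)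
    (\<lambda>x y z t. a1 * V1z x y z t + a2 * V2z x y z t + a3 * V3z x y z t + a4 * V4z x y z t)
    (\<lambda>x y z t. a1 * V1t x y z t + a2 * V2t x y z t + a3 * V3t x y z t + a4 * V4t x y z t)"
  unfolding C1_pderivs_def
proof (intro conjI allI impI ballI)
  fix x y z t :: real assume t: "t \<in> {0..t0}"
  show "((\<lambda>s. a1 * V1 s y z t + a2 * V2 s y z t + a3 * V3 s y z t + a4 * V4 s y z t) has_real_derivative
     a1 * V1x x y z t + a2 * V2x x y z t + a3 * V3x x y z t + a4 * V4x x y z t) (at x)"
    by (rule lin4_deriv; rule C1D[OF _ t], fact)
  show "((\<lambda>s. a1 * V1 x s z t + a2 * V2 x s z t + a3 * V3 x s z t + a4 * V4 x s z t) has_real_derivative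
     a1 * V1y x y z t + a2 * V2y x y z t + a3 * V3y x y z t + a4 * V4y x y z t) (at y)"
    by (rule lin4_deriv; rule C1D[OF _ t], fact)
  show "((\<lambda>s. a1 * V1 x y s t + a2 * V2 x y s t + a3 * V3 x y s t + a4 * V4 x y s t) has_real_derivative
     a1 * V1z x y z t + a2 * V2z x y z t + a3 * V3z x y z t + a4 * V4z x y z t) (at z)"
    by (rule lin4_deriv; rule C1D[OF _ t], fact)
  show "((\<lambda>s. a1 * V1 x y z s + a2 * V2 x y z s + a3 * V3 x y z s + a4 * V4 x y z s) has_real_derivative
     a1 * V1t x y z t + a2 * V2t x y z t + a3 * V3t x y z t + a4 * V4t x y z t) (at t within {0..t0})"
    by (rule lin4_deriv; rule C1D[OF _ t], fact)
next
  fix G assume "G \<in> {(\<lambda>x y z t. a1 * V1 x y z t + a2 * V2 x y z t + a3 * V3 x y z t + a4 * V4 x y z t),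
    (\<lambda>x y z t. a1 * V1x x y z t + a2 * V2x x y z t + a3 * V3x x y z t + a4 * V4x x y z t),
    (\<lambda>x y z t. a1 * V1y x y z t + a2 * V2y x y z t + a3 * V3y x y z t + a4 * V4y x y z t),
    (\<lambda>x y z t. a1 * V1z x y z t + a2 * V2z x y z t + a3 * V3z x y z t + a4 * V4z x y z t),
    (\<lambda>x y z t. a1 * V1t x y z t + a2 * V2t x y z t + a3 * V3t x y z t + a4 * V4t x y z t)}"
  then show "continuous_on (UNIV \<times> UNIV \<times> UNIV \<times> {0..t0}) (\<lambda>(x, y, z, t). G x y z t)"
    using cont_lin4[OF C1all(1)[OF A1] C1all(1)[OF A2] C1all(1)[OF A3] C1all(1)[OF A4]]
      cont_lin4[OF C1all(2)[OF A1] C1all(2)[OF A2] C1all(2)[OF A3] C1all(2)[OF A4]]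
      cont_lin4[OF C1all(3)[OF A1] C1all(3)[OF A2] C1all(3)[OF A3] C1all(3)[OF A4]]
      cont_lin4[OF C1all(4)[OF A1] C1all(4)[OF A2] C1all(4)[OF A3] C1all(4)[OF A4]]
      cont_lin4[OF C1all(5)[OF A1] C1all(5)[OF A2] C1all(5)[OF A3] C1all(5)[OF A4]]
    by auto
qed


lemma C1_shift: "C1_fun f \<Longrightarrow> C1_fun (\<lambda>s. f (s - c))"
  unfolding C1_fun_def
proof (elim exE conjE)
  fix f' assume d: "\<forall>s. (f has_real_derivative f' s) (at s)" and c: "continuous_on UNIV f'"
  have "((\<lambda>s. f (s - c)) has_real_derivative f' (s - c)) (at s)" for s
  proof -
    have h: "((\<lambda>s. s - c) has_real_derivative 1) (at s)" by (auto intro!: derivative_eq_intros)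
    show ?thesis using DERIV_chain2[OF d[rule_format] h] by simp
  qed
  then have "\<forall>s. ((\<lambda>s. f (s - c)) has_real_derivative f' (s - c)) (at s)" by blast
  moreover have "continuous_on UNIV (\<lambda>s. f' (s - c))"
    by (rule continuous_on_compose2[OF c]) (auto intro!: continuous_intros)
  ultimately show "\<exists>f'. (\<forall>s. ((\<lambda>s. f (s - c)) has_real_derivative f' s) (at s)) \<and> continuous_on UNIV f'"
    by (intro exI[of _ "\<lambda>s. f' (s - c)"]) simp
qed

context eul begin

lemma eigen2:
  fixes d :: "nat \<Rightarrow> real"
  shows "RF (\<lambda>j. - (vel j * k j) * d j) + U0 * RF (\<lambda>j. k j * d j) + 1/rho0 * RP (\<lambda>j. k j * d j) = 0"
   "RG (\<lambda>j. - (vel j * k j) * d j) + U0 * RG (\<lambda>j. k j * d j) + 1/rho0 * RP (\<lambda>j. l j * d j) = 0"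
   "RH (\<lambda>j. - (vel j * k j) * d j) + U0 * RH (\<lambda>j. k j * d j) + 1/rho0 * RP (\<lambda>j. m j * d j) = 0"
   "RP (\<lambda>j. - (vel j * k j) * d j) + U0 * RP (\<lambda>j. k j * d j) + rho0 * c0^2 * (RF (\<lambda>j. k j * d j) + RG (\<lambda>j. l j * d j) + RH (\<lambda>j. m j * d j)) = 0"
proof -
  note e = eigen[of "\<lambda>j. k j * d j"]
  have a: "(\<lambda>j. - vel j * (k j * d j)) = (\<lambda>j. - (vel j * k j) * d j)" by (auto simp: algebra_simps)
  have "\<forall>j\<in>{1..4::nat}. l j / k j * (k j * d j) = l j * d j" "\<forall>j\<in>{1..4::nat}. m j / k j * (k j * d j) = m j * d j"
    using kne by auto
  note cl = Rcong[OF this(1)] and cm = Rcong[OF this(2)]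
  show "RF (\<lambda>j. - (vel j * k j) * d j) + U0 * RF (\<lambda>j. k j * d j) + 1/rho0 * RP (\<lambda>j. k j * d j) = 0"
   "RG (\<lambda>j. - (vel j * k j) * d j) + U0 * RG (\<lambda>j. k j * d j) + 1/rho0 * RP (\<lambda>j. l j * d j) = 0"
   "RH (\<lambda>j. - (vel j * k j) * d j) + U0 * RH (\<lambda>j. k j * d j) + 1/rho0 * RP (\<lambda>j. m j * d j) = 0"
   "RP (\<lambda>j. - (vel j * k j) * d j) + U0 * RP (\<lambda>j. k j * d j) + rho0 * c0^2 * (RF (\<lambda>j. k j * d j) + RG (\<lambda>j. l j * d j) + RH (\<lambda>j. m j * d j)) = 0"
    using e unfolding a cl cm by simp_all
qed

lemma exist:
  assumes "I \<in> Z1 c0 rho0 k l m"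
  shows "\<exists>u. Z1_solution U0 c0 rho0 k l m t0 I u"
proof -
  obtain f where I: "I = If c0 rho0 k l m f" and fC: "\<forall>i\<in>{1..4::nat}. C1_fun (f i)"
    using assms unfolding Z1_def by blast
  have "\<forall>i\<in>{1..4::nat}. \<exists>f'. (\<forall>s. (f i has_real_derivative f' s) (at s)) \<and> continuous_on UNIV f'"
    using fC unfolding C1_fun_def by blast
  then obtain F' where F': "\<And>i. i \<in> {1..4::nat} \<Longrightarrow> (\<forall>s. (f i has_real_derivative F' i s) (at s)) \<and> continuous_on UNIV (F' i)"
    using bchoice[of "{1..4::nat}"] by metis
  define om where "om j = vel j * k j" for j
  define V where "V j x y z t = f j (k j * x + l j * y + m j * z - om j * t)" for j x y z t
  define D where "D j x y z t = F' j (k j * x + l j * y + m j * z - om j * t)" for j x y z t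
  have CV: "C1_pderivs t0 (V j) (\<lambda>x y z t. k j * D j x y z t) (\<lambda>x y z t. l j * D j x y z t)
     (\<lambda>x y z t. m j * D j x y z t) (\<lambda>x y z t. - om j * D j x y z t)" if "j \<in> {1..4}" for j
    unfolding V_def D_def using C1V[of "f j" "F' j" t0 "k j" "l j" "m j" "om j"] F'[OF that] by blast
  have jj: "(1::nat) \<in> {1..4}" "(2::nat) \<in> {1..4}" "(3::nat) \<in> {1..4}" "(4::nat) \<in> {1..4}" by auto
  note CV1 = CV[OF jj(1)] and CV2 = CV[OF jj(2)] and CV3 = CV[OF jj(3)] and CV4 = CV[OF jj(4)]
  define vx where "vx x y z t = k 1 * V 1 x y z t + k 2 * V 2 x y z t + l 3 / k 3 * V 3 x y z t + m 4 / k 4 * V 4 x y z t" for x y z t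
  define vy where "vy x y z t = l 1 * V 1 x y z t + l 2 * V 2 x y z t + (-1) * V 3 x y z t + 0 * V 4 x y z t" for x y z t
  define vz where "vz x y z t = m 1 * V 1 x y z t + m 2 * V 2 x y z t + 0 * V 3 x y z t + (-1) * V 4 x y z t" for x y z t
  define p where "p x y z t = (- c0 * rho0 * r 1) * V 1 x y z t + (c0 * rho0 * r 2) * V 2 x y z t + 0 * V 3 x y z t + 0 * V 4 x y z t" for x y z t
  have sl: "slice (vx, vy, vz, p) t = If c0 rho0 k l m (\<lambda>j s. f j (s - om j * t))" for t
    unfolding slice_def If_def Let_def vx_def vy_def vz_def p_def V_def r_def
    by (simp add: algebra_simps)
  show ?thesis
    unfolding Z1_solution_def
  proof (intro exI[of _ "(vx, vy, vz, p)"] conjI)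
    show "is_solution U0 c0 rho0 t0 I (vx, vy, vz, p)"
      unfolding is_solution_def prod.case
    proof (intro conjI)
      show "slice (vx, vy, vz, p) 0 = I" unfolding sl I by simp
      show "\<exists>vxx vxy vxz vxt vyx vyy vyz vyt vzx vzy vzz vzt px py pz pt.
         C1_pderivs t0 vx vxx vxy vxz vxt \<and>
         C1_pderivs t0 vy vyx vyy vyz vyt \<and>
         C1_pderivs t0 vz vzx vzy vzz vzt \<and>
         C1_pderivs t0 p px py pz pt \<and>
         (\<forall>x y z t. t \<in> {0..t0} \<longrightarrow>
            vxt x y z t + U0 * vxx x y z t + 1 / rho0 * px x y z t = 0 \<and>
            vyt x y z t + U0 * vyx x y z t + 1 / rho0 * py x y z t = 0 \<and>
            vzt x y z t + U0 * vzx x y z t + 1 / rho0 * pz x y z t = 0 \<and>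
            pt x y z t + U0 * px x y z t
              + rho0 * c0^2 * (vxx x y z t + vyy x y z t + vzz x y z t) = 0)"
        apply (unfold vx_def[abs_def] vy_def[abs_def] vz_def[abs_def] p_def[abs_def])
        apply (rule exI)+
        apply (intro conjI)
            apply (rule C1lin[OF CV1 CV2 CV3 CV4])
           apply (rule C1lin[OF CV1 CV2 CV3 CV4])
          apply (rule C1lin[OF CV1 CV2 CV3 CV4])
         apply (rule C1lin[OF CV1 CV2 CV3 CV4])
        apply (intro allI impI)
        subgoal for x y z t
          using eigen2[of "\<lambda>j. D j x y z t"] unfolding RF_def RG_def RH_def RP_def om_def
          by (simp add: algebra_simps)
        done
    qed
    show "\<forall>t\<in>{0..t0}. slice (vx, vy, vz, p) t \<in> Z1 c0 rho0 k l m"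
      unfolding sl Z1_def using fC C1_shift by blast
  qed
qed

end


lemma lin_bound:
  fixes A :: real
  assumes "\<bar>a1\<bar> \<le> A" "\<bar>a2\<bar> \<le> A" "\<bar>a3\<bar> \<le> A" "\<bar>a4\<bar> \<le> A"
  shows "\<bar>a1*xa + a2*xb + a3*xc + a4*xd\<bar> \<le> A * (\<bar>xa\<bar> + \<bar>xb\<bar> + \<bar>xc\<bar> + \<bar>xd\<bar>)"
proof -
  have b: "\<bar>a*x\<bar> \<le> A * \<bar>x\<bar>" if "\<bar>a\<bar> \<le> A" for a x :: real
    unfolding abs_mult using that by (simp add: mult_right_mono)
  have "\<bar>a1*xa + a2*xb + a3*xc + a4*xd\<bar> \<le> \<bar>a1*xa\<bar> + \<bar>a2*xb\<bar> + \<bar>a3*xc\<bar> + \<bar>a4*xd\<bar>" by arith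
  also have "\<dots> \<le> A * \<bar>xa\<bar> + A * \<bar>xb\<bar> + A * \<bar>xc\<bar> + A * \<bar>xd\<bar>"
    using b[OF assms(1), of xa] b[OF assms(2), of xb] b[OF assms(3), of xc] b[OF assms(4), of xd] by linarith
  finally show ?thesis by (simp add: algebra_simps)
qed

lemma Veps_iff: "X \<in> Veps c0 rho0 k l m e \<longleftrightarrow> X \<in> Z1 c0 rho0 k l m \<and>
   (\<forall>x y z. \<bar>fst X x y z\<bar> < e \<and> \<bar>fst (snd X) x y z\<bar> < e \<and> \<bar>fst (snd (snd X)) x y z\<bar> < e \<and> \<bar>snd (snd (snd X)) x y z\<bar> < e)"
  by (cases X) (auto simp: Veps_def)

context eul begin

definition "Ab = \<bar>k 1\<bar> + \<bar>k 2\<bar> + \<bar>l 3 / k 3\<bar> + \<bar>m 4 / k 4\<bar> + \<bar>l 1\<bar> + \<bar>l 2\<bar> + \<bar>m 1\<bar> + \<bar>m 2\<bar> + 1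
   + \<bar>c0 * rho0 * r 1\<bar> + \<bar>c0 * rho0 * r 2\<bar>"
definition "Bc = (\<Sum>j\<in>{1..4::nat}. \<bar>cF j\<bar> + \<bar>cG j\<bar> + \<bar>cH j\<bar> + \<bar>cP j\<bar>)"
definition "Mc = 16 * Ab * Bc"

lemma Ab_ge: "\<bar>k 1\<bar> \<le> Ab" "\<bar>k 2\<bar> \<le> Ab" "\<bar>l 3 / k 3\<bar> \<le> Ab" "\<bar>m 4 / k 4\<bar> \<le> Ab" "\<bar>l 1\<bar> \<le> Ab"
  "\<bar>l 2\<bar> \<le> Ab" "\<bar>m 1\<bar> \<le> Ab" "\<bar>m 2\<bar> \<le> Ab" "\<bar>-1::real\<bar> \<le> Ab" "\<bar>0::real\<bar> \<le> Ab"
  "\<bar>- c0 * rho0 * r 1\<bar> \<le> Ab" "\<bar>c0 * rho0 * r 2\<bar> \<le> Ab" "0 \<le> Ab"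
  unfolding Ab_def by (simp_all add: abs_mult)

lemma Ab1: "1 \<le> Ab" unfolding Ab_def by simp

lemma Bc_ge: assumes "j \<in> {1..4::nat}" shows "\<bar>cF j\<bar> \<le> Bc" "\<bar>cG j\<bar> \<le> Bc" "\<bar>cH j\<bar> \<le> Bc" "\<bar>cP j\<bar> \<le> Bc"
proof -
  have "\<bar>cF j\<bar> + \<bar>cG j\<bar> + \<bar>cH j\<bar> + \<bar>cP j\<bar> \<le> Bc"
    unfolding Bc_def by (rule member_le_sum) (use assms in auto)
  then show "\<bar>cF j\<bar> \<le> Bc" "\<bar>cG j\<bar> \<le> Bc" "\<bar>cH j\<bar> \<le> Bc" "\<bar>cP j\<bar> \<le> Bc" by linarith+
qed

lemma Mc_ge: "0 \<le> Mc"
proof -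
  have "0 \<le> Bc" unfolding Bc_def by (intro sum_nonneg) auto
  then show ?thesis unfolding Mc_def using Ab_ge(13) by simp
qed

lemma R_bound:
  "\<bar>RF V\<bar> \<le> Ab * (\<bar>V 1\<bar> + \<bar>V 2\<bar> + \<bar>V 3\<bar> + \<bar>V 4\<bar>)"
  "\<bar>RG V\<bar> \<le> Ab * (\<bar>V 1\<bar> + \<bar>V 2\<bar> + \<bar>V 3\<bar> + \<bar>V 4\<bar>)"
  "\<bar>RH V\<bar> \<le> Ab * (\<bar>V 1\<bar> + \<bar>V 2\<bar> + \<bar>V 3\<bar> + \<bar>V 4\<bar>)"
  "\<bar>RP V\<bar> \<le> Ab * (\<bar>V 1\<bar> + \<bar>V 2\<bar> + \<bar>V 3\<bar> + \<bar>V 4\<bar>)"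
proof -
  show "\<bar>RF V\<bar> \<le> Ab * (\<bar>V 1\<bar> + \<bar>V 2\<bar> + \<bar>V 3\<bar> + \<bar>V 4\<bar>)"
    unfolding RF_def by (rule lin_bound) (fact Ab_ge)+
  show "\<bar>RG V\<bar> \<le> Ab * (\<bar>V 1\<bar> + \<bar>V 2\<bar> + \<bar>V 3\<bar> + \<bar>V 4\<bar>)"
    using lin_bound[OF Ab_ge(5) Ab_ge(6) Ab_ge(9) Ab_ge(10), where xa="V 1" and xb="V 2" and xc="V 3" and xd="V 4"]
    unfolding RG_def by simp
  show "\<bar>RH V\<bar> \<le> Ab * (\<bar>V 1\<bar> + \<bar>V 2\<bar> + \<bar>V 3\<bar> + \<bar>V 4\<bar>)"
    using lin_bound[OF Ab_ge(7) Ab_ge(8) Ab_ge(10) Ab_ge(9), where xa="V 1" and xb="V 2" and xc="V 3" and xd="V 4"]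
    unfolding RH_def by simp
  show "\<bar>RP V\<bar> \<le> Ab * (\<bar>V 1\<bar> + \<bar>V 2\<bar> + \<bar>V 3\<bar> + \<bar>V 4\<bar>)"
    using lin_bound[OF Ab_ge(11) Ab_ge(12) Ab_ge(10) Ab_ge(10), where xa="V 1" and xb="V 2" and xc="V 3" and xd="V 4"]
    unfolding RP_def by simp
qed

lemma W_bound: "j \<in> {1..4} \<Longrightarrow> \<bar>W j F G H P\<bar> \<le> Bc * (\<bar>F\<bar> + \<bar>G\<bar> + \<bar>H\<bar> + \<bar>P\<bar>)"
  unfolding Wlin by (rule lin_bound; rule Bc_ge)

lemma W_diff: "W j F G H P - W j F' G' H' P' = W j (F - F') (G - G') (H - H') (P - P')"
  unfolding Wlin by (simp add: algebra_simps)

lemma R_diff: "RF V - RF V' = RF (\<lambda>j. V j - V' j)" "RG V - RG V' = RG (\<lambda>j. V j - V' j)"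
  "RH V - RH V' = RH (\<lambda>j. V j - V' j)" "RP V - RP V' = RP (\<lambda>j. V j - V' j)"
  unfolding RF_def RG_def RH_def RP_def using k3 k4 by (simp_all add: field_simps)

lemma evo_diff:
  assumes e: "\<forall>x y z. \<bar>fst I1 x y z - fst I2 x y z\<bar> \<le> e \<and> \<bar>fst (snd I1) x y z - fst (snd I2) x y z\<bar> \<le> e \<and>
     \<bar>fst (snd (snd I1)) x y z - fst (snd (snd I2)) x y z\<bar> \<le> e \<and> \<bar>snd (snd (snd I1)) x y z - snd (snd (snd I2)) x y z\<bar> \<le> e"
  shows "\<bar>fst (Evo I1 t) x y z - fst (Evo I2 t) x y z\<bar> \<le> Mc * e \<and> \<bar>fst (snd (Evo I1 t)) x y z - fst (snd (Evo I2 t)) x y z\<bar> \<le> Mc * e \<and>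
     \<bar>fst (snd (snd (Evo I1 t))) x y z - fst (snd (snd (Evo I2 t))) x y z\<bar> \<le> Mc * e \<and>
     \<bar>snd (snd (snd (Evo I1 t))) x y z - snd (snd (snd (Evo I2 t))) x y z\<bar> \<le> Mc * e"
proof -
  define Vd where "Vd j = Wst j I1 (x - vel j * t) y z - Wst j I2 (x - vel j * t) y z" for j
  have wb: "\<bar>Vd j\<bar> \<le> Bc * (4 * e)" if j: "j \<in> {1..4}" for j
  proof -
    have "\<bar>Vd j\<bar> \<le> Bc * (e + e + e + e)"
      unfolding Vd_def Wst_def W_diff
      apply (rule order_trans[OF W_bound[OF j]])
      apply (rule mult_left_mono)
      using e[rule_format, of "x - vel j * t" y z] Bc_ge(1)[OF j] by (auto intro!: add_mono)
    then show ?thesis by simp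
  qed
  have sb: "\<bar>Vd 1\<bar> + \<bar>Vd 2\<bar> + \<bar>Vd 3\<bar> + \<bar>Vd 4\<bar> \<le> 16 * Bc * e"
    using wb[of 1] wb[of 2] wb[of 3] wb[of 4] by simp
  have fin: "Ab * (\<bar>Vd 1\<bar> + \<bar>Vd 2\<bar> + \<bar>Vd 3\<bar> + \<bar>Vd 4\<bar>) \<le> Mc * e"
    unfolding Mc_def using mult_left_mono[OF sb Ab_ge(13)] by (simp add: algebra_simps)
  show ?thesis
    unfolding Evo_def fst_conv snd_conv R_diff
    using order_trans[OF R_bound(1)[of Vd] fin] order_trans[OF R_bound(2)[of Vd] fin]
      order_trans[OF R_bound(3)[of Vd] fin] order_trans[OF R_bound(4)[of Vd] fin]
    unfolding Vd_def by simp
qed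

lemma Evo_zero: "Evo ((\<lambda>x y z. 0), (\<lambda>x y z. 0), (\<lambda>x y z. 0), (\<lambda>x y z. 0)) t =
   ((\<lambda>x y z. 0), (\<lambda>x y z. 0), (\<lambda>x y z. 0), (\<lambda>x y z. 0))"
  unfolding Evo_def Wst_def Wlin RF_def RG_def RH_def RP_def by simp

end


theorem proposition12:
  fixes U0 c0 rho0 :: real and k l m :: "nat \<Rightarrow> real"
  assumes "U0 > 0" and "c0 > 0" and "rho0 > 0"
    and "\<forall>i\<in>{1..4::nat}. k i \<noteq> 0"
    and "Delta c0 rho0 k l m \<noteq> 0"
  shows "(\<forall>t0>0. well_posed U0 c0 rho0 k l m t0) \<and> lyapunov_stable U0 c0 rho0 k l m"
proof -
  interpret eul U0 c0 rho0 k l m using assms by unfold_locales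
  have small: "Mc * (\<epsilon> / (Mc + 1)) < \<epsilon>" if "\<epsilon> > 0" for \<epsilon>
    using Mc_ge that by (simp add: field_simps)
  have wp: "well_posed U0 c0 rho0 k l m t0" for t0
    unfolding well_posed_def
  proof (intro conjI ballI allI impI)
    fix I assume "I \<in> Z1 c0 rho0 k l m"
    then show "\<exists>u. Z1_solution U0 c0 rho0 k l m t0 I u" by (rule exist)
  next
    fix I u v t
    assume "Z1_solution U0 c0 rho0 k l m t0 I u" "Z1_solution U0 c0 rho0 k l m t0 I v" "t \<in> {0..t0}"
    then show "slice u t = slice v t" using key by metis
  next
    fix I Is u us t
    assume cv: "conv_Z1 Is I" and su: "Z1_solution U0 c0 rho0 k l m t0 I u"
      and sus: "\<forall>n. Z1_solution U0 c0 rho0 k l m t0 (Is n) (us n)" and t: "t \<in> {0..t0}"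
    have ks: "slice (us n) t = Evo (Is n) t" for n using key[OF sus[rule_format] t] .
    show "conv_Z1 (\<lambda>n. slice (us n) t) (slice u t)"
      unfolding ks key[OF su t] conv_Z1_def
    proof (intro allI impI)
      fix \<epsilon> :: real assume \<epsilon>: "\<epsilon> > 0"
      define e where "e = \<epsilon> / (Mc + 1)"
      have e0: "e > 0" unfolding e_def using Mc_ge \<epsilon> by simp
      have "\<forall>\<^sub>F n in sequentially. \<forall>x y z.
         \<bar>fst (Is n) x y z - fst I x y z\<bar> < e \<and>
         \<bar>fst (snd (Is n)) x y z - fst (snd I) x y z\<bar> < e \<and>
         \<bar>fst (snd (snd (Is n))) x y z - fst (snd (snd I)) x y z\<bar> < e \<and>
         \<bar>snd (snd (snd (Is n))) x y z - snd (snd (snd I)) x y z\<bar> < e"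
        using cv e0 unfolding conv_Z1_def by blast
      then show "\<forall>\<^sub>F n in sequentially. \<forall>x y z.
         \<bar>fst (Evo (Is n) t) x y z - fst (Evo I t) x y z\<bar> < \<epsilon> \<and>
         \<bar>fst (snd (Evo (Is n) t)) x y z - fst (snd (Evo I t)) x y z\<bar> < \<epsilon> \<and>
         \<bar>fst (snd (snd (Evo (Is n) t))) x y z - fst (snd (snd (Evo I t))) x y z\<bar> < \<epsilon> \<and>
         \<bar>snd (snd (snd (Evo (Is n) t))) x y z - snd (snd (snd (Evo I t))) x y z\<bar> < \<epsilon>"
      proof (rule eventually_mono)
        fix n assume h: "\<forall>x y z.
         \<bar>fst (Is n) x y z - fst I x y z\<bar> < e \<and>
         \<bar>fst (snd (Is n)) x y z - fst (snd I) x y z\<bar> < e \<and>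
         \<bar>fst (snd (snd (Is n))) x y z - fst (snd (snd I)) x y z\<bar> < e \<and>
         \<bar>snd (snd (snd (Is n))) x y z - snd (snd (snd I)) x y z\<bar> < e"
        have h': "\<forall>x y z.
         \<bar>fst (Is n) x y z - fst I x y z\<bar> \<le> e \<and>
         \<bar>fst (snd (Is n)) x y z - fst (snd I) x y z\<bar> \<le> e \<and>
         \<bar>fst (snd (snd (Is n))) x y z - fst (snd (snd I)) x y z\<bar> \<le> e \<and>
         \<bar>snd (snd (snd (Is n))) x y z - snd (snd (snd I)) x y z\<bar> \<le> e"
          using h by (meson less_imp_le)
        have me: "Mc * e < \<epsilon>" unfolding e_def using small[OF \<epsilon>] .
        show "\<forall>x y z.
         \<bar>fst (Evo (Is n) t) x y z - fst (Evo I t) x y z\<bar> < \<epsilon> \<and>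
         \<bar>fst (snd (Evo (Is n) t)) x y z - fst (snd (Evo I t)) x y z\<bar> < \<epsilon> \<and>
         \<bar>fst (snd (snd (Evo (Is n) t))) x y z - fst (snd (snd (Evo I t))) x y z\<bar> < \<epsilon> \<and>
         \<bar>snd (snd (snd (Evo (Is n) t))) x y z - snd (snd (snd (Evo I t))) x y z\<bar> < \<epsilon>"
        proof (intro allI)
          fix x y z
          show "\<bar>fst (Evo (Is n) t) x y z - fst (Evo I t) x y z\<bar> < \<epsilon> \<and>
         \<bar>fst (snd (Evo (Is n) t)) x y z - fst (snd (Evo I t)) x y z\<bar> < \<epsilon> \<and>
         \<bar>fst (snd (snd (Evo (Is n) t))) x y z - fst (snd (snd (Evo I t))) x y z\<bar> < \<epsilon> \<and>
         \<bar>snd (snd (snd (Evo (Is n) t))) x y z - snd (snd (snd (Evo I t))) x y z\<bar> < \<epsilon>"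
            using evo_diff[OF h', of t x y z] me by linarith
        qed
      qed
    qed
  qed
  have ly: "lyapunov_stable U0 c0 rho0 k l m"
    unfolding lyapunov_stable_def
  proof (intro conjI allI impI)
    show "well_posed U0 c0 rho0 k l m t0" for t0 by (rule wp)
  next
    fix \<epsilon> :: real assume \<epsilon>: "\<epsilon> > 0"
    define e where "e = \<epsilon> / (Mc + 1)"
    have e0: "e > 0" unfolding e_def using Mc_ge \<epsilon> by simp
    have me: "Mc * e < \<epsilon>" unfolding e_def using small[OF \<epsilon>] .
    show "\<exists>\<eta>>0. \<forall>I\<in>Veps c0 rho0 k l m \<eta>. \<forall>t0>0. \<forall>u. Z1_solution U0 c0 rho0 k l m t0 I u \<longrightarrow>
          (\<forall>t\<in>{0..t0}. slice u t \<in> Veps c0 rho0 k l m \<epsilon>)"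
    proof (intro exI[of _ e] conjI e0 ballI allI impI)
      fix I t0 u t
      assume I: "I \<in> Veps c0 rho0 k l m e" and su: "Z1_solution U0 c0 rho0 k l m t0 I u" and t: "t \<in> {0..t0}"
      define Z :: state where "Z = ((\<lambda>x y z. 0), (\<lambda>x y z. 0), (\<lambda>x y z. 0), (\<lambda>x y z. 0))"
      have h': "\<forall>x y z.
         \<bar>fst I x y z - fst Z x y z\<bar> \<le> e \<and>
         \<bar>fst (snd I) x y z - fst (snd Z) x y z\<bar> \<le> e \<and>
         \<bar>fst (snd (snd I)) x y z - fst (snd (snd Z)) x y z\<bar> \<le> e \<and>
         \<bar>snd (snd (snd I)) x y z - snd (snd (snd Z)) x y z\<bar> \<le> e"
        using I unfolding Veps_iff Z_def by (simp add: less_imp_le)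
      have EZ: "Evo Z t = Z" unfolding Z_def by (rule Evo_zero)
      have "slice u t \<in> Z1 c0 rho0 k l m" using su t unfolding Z1_solution_def by blast
      moreover have "\<forall>x y z. \<bar>fst (Evo I t) x y z\<bar> < \<epsilon> \<and> \<bar>fst (snd (Evo I t)) x y z\<bar> < \<epsilon> \<and>
          \<bar>fst (snd (snd (Evo I t))) x y z\<bar> < \<epsilon> \<and> \<bar>snd (snd (snd (Evo I t))) x y z\<bar> < \<epsilon>"
      proof (intro allI)
        fix x y z
        show "\<bar>fst (Evo I t) x y z\<bar> < \<epsilon> \<and> \<bar>fst (snd (Evo I t)) x y z\<bar> < \<epsilon> \<and>
          \<bar>fst (snd (snd (Evo I t))) x y z\<bar> < \<epsilon> \<and> \<bar>snd (snd (snd (Evo I t))) x y z\<bar> < \<epsilon>"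
          using evo_diff[OF h', of t x y z] me unfolding EZ by (simp add: Z_def)
      qed
      ultimately show "slice u t \<in> Veps c0 rho0 k l m \<epsilon>"
        unfolding Veps_iff key[OF su t] by simp
    qed
  qed
  show ?thesis using wp ly by blast
qed


end
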